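(* Let $d,N\in\mathbb{N}$ and $k=2$. Every $\mathbf{x}=(\mathbf{x}_1,\dots,\mathbf{x}_N)\in\mathcal{G}_{d,2}^N$ satisfies $$\mathsf{bary}(\mathbf{x})=1\oplus\Big(\frac1N\sum_{i=1}^N\mathbf{x}_i^{(1)}\Big)\oplus\Big(\frac1N\sum_{i=1}^N\mathbf{x}_i^{(2)}-\frac1{2N}\sum_{i=1}^N\mathbf{x}_i^{(1)}\otimes\mathbf{x}_i^{(1)}+\frac1{2N^2}\sum_{i_1=1}^N\sum_{i_2=1}^N\mathbf{x}_{i_1}^{(1)}\otimes\mathbf{x}_{i_2}^{(1)}\Big).$$
   Context: $T_{d,2}=\mathbb{R}\oplus\mathbb{R}^d\oplus\mathbb{R}^{d\times d}$ with elements $\mathbf{z}=\mathbf{z}^{(0)}\oplus\mathbf{z}^{(1)}\oplus\mathbf{z}^{(2)}$ and product given bilinearly by the tensor (outer) product of levels, truncated (products landing in level $>2$ are $0$); $\mathbf{a}\otimes\mathbf{b}$ for vectors is the matrix $(a_ib_j)$. $\mathfrak{g}_{d,2}$ is the smallest Lie subalgebra (commutator bracket) of $T_{d,2}$ containing $e_1,\dots,e_d\in\mathbb{R}^d$; $\exp(\mathbf{z})=\sum_{\ell=0}^2\mathbf{z}^{\otimes\ell}/\ell!$; $\mathcal{G}_{d,2}=\exp(\mathfrak{g}_{d,2})$, a group with $\log=\exp^{-1}$, $\log(\mathbf{s})=\sum_{\ell\ge1}\frac{(-1)^{\ell+1}}{\ell}(\mathbf{s}-1)^{\otimes\ell}$.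 For $\mathbf{x}\in\mathcal{G}_{d,2}^N$, $\mathsf{bary}(\mathbf{x})$ is the unique $\mathbf{m}\in\mathcal{G}_{d,2}$ with $\sum_{i=1}^N\log(\mathbf{m}^{-1}\mathbf{x}_i)=0$. *)

theory Defs
  imports "HOL-Analysis.Analysis"
begin

text \<open>Truncated tensor algebra T_{d,2} = R + R^d + R^(d x d), represented as a triple;
  the vector-space structure (+, scaleR, 0) is the product structure from the library.\<close>

type_synonym ('d) tens2 = "real \<times> (real ^ 'd) \<times> (real ^ 'd ^ 'd)"

definition outer :: "real ^ ('d::finite) \<Rightarrow> real ^ 'd \<Rightarrow> real ^ 'd ^ 'd" where
  "outer a b = (\<chi> i j. a $ i * b $ j)"

definition lvl0 :: "('d::finite) tens2 \<Rightarrow> real" where "lvl0 z = fst z"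
definition lvl1 :: "('d::finite) tens2 \<Rightarrow> real ^ 'd" where "lvl1 z = fst (snd z)"
definition lvl2 :: "('d::finite) tens2 \<Rightarrow> real ^ 'd ^ 'd" where "lvl2 z = snd (snd z)"

definition tmk :: "real \<Rightarrow> real ^ ('d::finite) \<Rightarrow> real ^ 'd ^ 'd \<Rightarrow> 'd tens2" where
  "tmk a b c = (a, b, c)"

definition tmul :: "('d::finite) tens2 \<Rightarrow> 'd tens2 \<Rightarrow> 'd tens2" where
  "tmul a b = tmk (lvl0 a * lvl0 b)
                  (lvl0 a *\<^sub>R lvl1 b + lvl0 b *\<^sub>R lvl1 a)
                  (lvl0 a *\<^sub>R lvl2 b + lvl0 b *\<^sub>R lvl2 a + outer (lvl1 a) (lvl1 b))"

definition tone :: "('d::finite) tens2" where "tone = tmk 1 0 0"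

definition tbracket :: "('d::finite) tens2 \<Rightarrow> 'd tens2 \<Rightarrow> 'd tens2" where
  "tbracket a b = tmul a b - tmul b a"

definition tbasis :: "('d::finite) \<Rightarrow> 'd tens2" where
  "tbasis i = tmk 0 (axis i 1) 0"

inductive_set liealg :: "('d::finite) tens2 set" where
  gen: "tbasis i \<in> liealg"
| zero: "0 \<in> liealg"
| add: "a \<in> liealg \<Longrightarrow> b \<in> liealg \<Longrightarrow> a + b \<in> liealg"
| scale: "a \<in> liealg \<Longrightarrow> c *\<^sub>R a \<in> liealg"
| bracket: "a \<in> liealg \<Longrightarrow> b \<in> liealg \<Longrightarrow> tbracket a b \<in> liealg"

definition texp :: "('d::finite) tens2 \<Rightarrow> 'd tens2" where
  "texp z = tone + z + (1/2) *\<^sub>R tmul z z"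

text \<open>log(s) = sum_{l>=1} (-1)^(l+1)/l (s-1)^l; on elements with level-0 component 1
  (in particular on G_{d,2}) the terms with l >= 3 vanish, so the series is the finite sum below.\<close>
definition tlog :: "('d::finite) tens2 \<Rightarrow> 'd tens2" where
  "tlog s = (s - tone) - (1/2) *\<^sub>R tmul (s - tone) (s - tone)"

text \<open>Multiplicative inverse in T_{d,2} (for level-0 component nonzero).\<close>
definition tinv :: "('d::finite) tens2 \<Rightarrow> 'd tens2" where
  "tinv a = tmk (1 / lvl0 a)
                (- (1 / (lvl0 a)^2) *\<^sub>R lvl1 a)
                (- (1 / (lvl0 a)^2) *\<^sub>R lvl2 a + (1 / (lvl0 a)^3) *\<^sub>R outer (lvl1 a) (lvl1 a))"

definition tgroup :: "('d::finite) tens2 set" where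
  "tgroup = texp ` liealg"

definition bary :: "nat \<Rightarrow> (nat \<Rightarrow> ('d::finite) tens2) \<Rightarrow> 'd tens2" where
  "bary N x = (THE m. m \<in> tgroup \<and> (\<Sum>i=1..N. tlog (tmul (tinv m) (x i))) = 0)"

end

theory Submission imports Defs begin

lemma tens_eq: "(z::('d::finite) tens2) = w \<longleftrightarrow> lvl0 z = lvl0 w \<and> lvl1 z = lvl1 w \<and> lvl2 z = lvl2 w"
  by (cases z; cases w) (auto simp: lvl0_def lvl1_def lvl2_def)

lemma lvl_tmk[simp]: "lvl0 (tmk a b c) = a" "lvl1 (tmk a b c) = b" "lvl2 (tmk a b c) = c"
  by (auto simp: lvl0_def lvl1_def lvl2_def tmk_def)

lemma lvl_add[simp]: "lvl0 (z + w) = lvl0 z + lvl0 w" "lvl1 (z + w) = lvl1 z + lvl1 w" "lvl2 (z + w) = lvl2 z + lvl2 w"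
  by (auto simp: lvl0_def lvl1_def lvl2_def)
lemma lvl_diff[simp]: "lvl0 (z - w) = lvl0 z - lvl0 w" "lvl1 (z - w) = lvl1 z - lvl1 w" "lvl2 (z - w) = lvl2 z - lvl2 w"
  by (auto simp: lvl0_def lvl1_def lvl2_def)
lemma lvl_scale[simp]: "lvl0 (r *\<^sub>R z) = r * lvl0 z" "lvl1 (r *\<^sub>R z) = r *\<^sub>R lvl1 z" "lvl2 (r *\<^sub>R z) = r *\<^sub>R lvl2 z"
  by (auto simp: lvl0_def lvl1_def lvl2_def)
lemma lvl_zero[simp]: "lvl0 0 = 0" "lvl1 0 = 0" "lvl2 0 = 0"
  by (simp_all add: lvl0_def lvl1_def lvl2_def)
lemma lvl_sum[simp]: "lvl0 (sum f S) = (\<Sum>s\<in>S. lvl0 (f s))" "lvl1 (sum f S) = (\<Sum>s\<in>S. lvl1 (f s))"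
   "lvl2 (sum f S) = (\<Sum>s\<in>S. lvl2 (f s))"
  by (induction S rule: infinite_finite_induct; simp)+

lemma lvl_tone[simp]: "lvl0 tone = 1" "lvl1 tone = 0" "lvl2 tone = 0" by (auto simp: tone_def)
lemma lvl_tmul[simp]: "lvl0 (tmul a b) = lvl0 a * lvl0 b"
  "lvl1 (tmul a b) = lvl0 a *\<^sub>R lvl1 b + lvl0 b *\<^sub>R lvl1 a"
  "lvl2 (tmul a b) = lvl0 a *\<^sub>R lvl2 b + lvl0 b *\<^sub>R lvl2 a + outer (lvl1 a) (lvl1 b)"
  by (auto simp: tmul_def)
lemma outer_nth[simp]: "outer a b $ i $ j = a $ i * b $ j" by (simp add: outer_def)

lemma liealg_sub: "z \<in> liealg \<Longrightarrow> lvl0 z = 0 \<and> (\<forall>i j. lvl2 z $ i $ j + lvl2 z $ j $ i = 0)"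
proof (induction rule: liealg.induct)
  case (add a b)
  have "lvl2 a $ i $ j + lvl2 a $ j $ i = 0" for i j
    using add.IH by blast
  moreover have "lvl2 b $ i $ j + lvl2 b $ j $ i = 0" for i j
    using add.IH by blast
  ultimately show ?case using add.IH by (simp add: algebra_simps)
next
  case (scale a c)
  have "lvl2 a $ i $ j + lvl2 a $ j $ i = 0" for i j
    using scale.IH by blast
  then have "c * lvl2 a $ i $ j + c * lvl2 a $ j $ i = 0" for i j
    by (metis distrib_left mult_zero_right)
  then show ?case using scale.IH by simp
qed (auto simp: tbasis_def tbracket_def)

lemma liealg_sum: "finite S \<Longrightarrow> (\<forall>s\<in>S. f s \<in> liealg) \<Longrightarrow> sum f S \<in> liealg"
  by (induction S rule: finite_induct) (auto intro: liealg.intros)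

lemma axis_nth1: "axis i (1::real) $ k = (if k = i then 1 else 0)"
  by (simp add: axis_def)

lemma sum_delta_real: "(\<Sum>i\<in>(UNIV::('d::finite) set). (if i = k then f i else (0::real))) = f k"
  by (simp add: sum.delta')

lemma liealg_v: "tmk 0 v 0 \<in> (liealg :: ('d::finite) tens2 set)"
proof -
  have "lvl1 (\<Sum>i\<in>UNIV. (v$i) *\<^sub>R tbasis i) $ k = v $ k" for k
  proof -
    have "lvl1 (\<Sum>i\<in>UNIV. (v$i) *\<^sub>R tbasis i) $ k = (\<Sum>i\<in>UNIV. v$i * axis i 1 $ k)"
      by (simp only: real_scaleR_def lvl_sum lvl_scale sum_component vector_scaleR_component tbasis_def lvl_tmk)
    also have "\<dots> = (\<Sum>i\<in>UNIV. (if i = k then v $ i else 0))"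
      by (intro sum.cong refl) (simp add: axis_nth1)
    also have "\<dots> = v $ k" by (rule sum_delta_real)
    finally show ?thesis .
  qed
  moreover have "lvl0 (\<Sum>i\<in>UNIV. (v$i) *\<^sub>R tbasis i) = 0" "lvl2 (\<Sum>i\<in>UNIV. (v$i) *\<^sub>R tbasis i) = 0"
    by (simp_all add: tbasis_def)
  ultimately have "tmk 0 v 0 = (\<Sum>i\<in>UNIV. (v$i) *\<^sub>R tbasis i)"
    unfolding tens_eq by (simp add: vec_eq_iff)
  thus ?thesis by (auto intro!: liealg_sum liealg.intros)
qed

lemma dd1: "(\<Sum>i\<in>(UNIV::('d::finite) set). \<Sum>j\<in>(UNIV::'d set). if i = k then (if j = l then f i j else 0) else (0::real)) = f k l"
proof -
  have "(\<Sum>i\<in>(UNIV::'d set). \<Sum>j\<in>(UNIV::'d set). if i = k then (if j = l then f i j else 0) else (0::real))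
      = (\<Sum>i\<in>(UNIV::'d set). if i = k then f i l else 0)"
    by (intro sum.cong refl) (simp add: sum.delta')
  also have "\<dots> = f k l" by (simp add: sum.delta')
  finally show ?thesis .
qed

lemma dd2: "(\<Sum>i\<in>(UNIV::('d::finite) set). \<Sum>j\<in>(UNIV::'d set). if j = k then (if i = l then f i j else 0) else (0::real)) = f l k"
proof -
  have "(\<Sum>i\<in>(UNIV::'d set). \<Sum>j\<in>(UNIV::'d set). if j = k then (if i = l then f i j else 0) else (0::real))
      = (\<Sum>i\<in>(UNIV::'d set). if i = l then f i k else 0)"
    by (intro sum.cong refl) (simp add: sum.delta')
  also have "\<dots> = f l k" by (simp add: sum.delta')
  finally show ?thesis .
qed

lemma liealg_A: assumes "\<forall>i j. A $ i $ j + A $ j $ i = 0"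
  shows "tmk 0 0 A \<in> (liealg :: ('d::finite) tens2 set)"
proof -
  define S where "S = (\<Sum>i\<in>UNIV. \<Sum>j\<in>UNIV. (A$i$j/2) *\<^sub>R tbracket (tbasis i) (tbasis j))"
  have br: "lvl2 (tbracket (tbasis i) (tbasis j)) $ k $ l = (if i = k then (if j = l then 1 else 0) else 0)
       - (if j = k then (if i = l then 1 else 0) else 0)" for i j k l
    by (simp add: tbasis_def tbracket_def axis_def)
  have "lvl2 S $ k $ l = A $ k $ l" for k l
  proof -
    have "lvl2 S $ k $ l = (\<Sum>i\<in>UNIV. \<Sum>j\<in>UNIV. (A$i$j/2) * lvl2 (tbracket (tbasis i) (tbasis j)) $ k $ l)"
      unfolding S_def by (simp only: real_scaleR_def lvl_sum lvl_scale sum_component vector_scaleR_component)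
    also have "\<dots> = (\<Sum>i\<in>UNIV. \<Sum>j\<in>UNIV. (if i = k then (if j = l then A$i$j/2 else 0) else 0))
       - (\<Sum>i\<in>UNIV. \<Sum>j\<in>UNIV. (if j = k then (if i = l then A$i$j/2 else 0) else 0))"
      unfolding br sum_subtractf[symmetric] by (intro sum.cong refl) simp
    also have "(\<Sum>i\<in>UNIV. \<Sum>j\<in>UNIV. (if i = k then (if j = l then A$i$j/2 else 0) else 0)) = A$k$l/2"
      by (rule dd1)
    also have "(\<Sum>i\<in>UNIV. \<Sum>j\<in>UNIV. (if j = k then (if i = l then A$i$j/2 else 0) else 0)) = A$l$k/2"
      by (rule dd2)
    also have "A$k$l/2 - A$l$k/2 = A $ k $ l" using assms[rule_format, of k l] by (simp add: field_simps)
    finally show ?thesis .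
  qed
  moreover have "lvl0 S = 0" "lvl1 S = 0"
    by (simp_all add: S_def tbasis_def tbracket_def)
  ultimately have "tmk 0 0 A = S"
    unfolding tens_eq by (simp add: vec_eq_iff)
  thus ?thesis unfolding S_def by (auto intro!: liealg_sum liealg.intros)
qed

lemma texp_lvl: "lvl0 w = 0 \<Longrightarrow> lvl0 (texp w) = 1 \<and> lvl1 (texp w) = lvl1 w \<and>
   lvl2 (texp w) = lvl2 w + (1/2) *\<^sub>R outer (lvl1 w) (lvl1 w)"
  by (simp add: texp_def)

lemma tgroup_iff: "(z::('d::finite) tens2) \<in> tgroup \<longleftrightarrow>
   lvl0 z = 1 \<and> (\<forall>i j. lvl2 z $ i $ j + lvl2 z $ j $ i = lvl1 z $ i * lvl1 z $ j)"
proof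
  assume "z \<in> tgroup"
  then obtain w where w: "w \<in> liealg" "z = texp w" by (auto simp: tgroup_def)
  note a = liealg_sub[OF w(1)]
  note b = texp_lvl[of w, OF conjunct1[OF a]]
  show "lvl0 z = 1 \<and> (\<forall>i j. lvl2 z $ i $ j + lvl2 z $ j $ i = lvl1 z $ i * lvl1 z $ j)"
  proof (intro conjI allI)
    show "lvl0 z = 1" using b w(2) by simp
    fix i j
    have "lvl2 w $ i $ j + lvl2 w $ j $ i = 0" using a by blast
    thus "lvl2 z $ i $ j + lvl2 z $ j $ i = lvl1 z $ i * lvl1 z $ j"
      using b w(2) by (simp add: algebra_simps)
  qed
next
  assume h: "lvl0 z = 1 \<and> (\<forall>i j. lvl2 z $ i $ j + lvl2 z $ j $ i = lvl1 z $ i * lvl1 z $ j)"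
  define A where "A = lvl2 z - (1/2) *\<^sub>R outer (lvl1 z) (lvl1 z)"
  have "A $ i $ j + A $ j $ i = 0" for i j
  proof -
    have "lvl2 z $ i $ j + lvl2 z $ j $ i = lvl1 z $ i * lvl1 z $ j" using h by blast
    thus ?thesis by (simp add: A_def algebra_simps)
  qed
  hence "tmk 0 (lvl1 z) 0 + tmk 0 0 A \<in> liealg" by (intro liealg.intros liealg_v liealg_A) blast
  moreover have "z = texp (tmk 0 (lvl1 z) 0 + tmk 0 0 A)"
    using h by (simp add: tens_eq texp_def A_def)
  ultimately show "z \<in> tgroup" by (auto simp: tgroup_def)
qed


lemma log_term:
  assumes "lvl0 m = 1" "lvl0 y = 1"
  shows "lvl0 (tlog (tmul (tinv m) y)) = 0"
    "lvl1 (tlog (tmul (tinv m) y)) = lvl1 y - lvl1 m"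
    "lvl2 (tlog (tmul (tinv m) y)) $ i $ j = lvl2 y $ i $ j - lvl2 m $ i $ j
       + (1/2) * (lvl1 m $ i * lvl1 m $ j) - (1/2) * (lvl1 m $ i * lvl1 y $ j)
       + (1/2) * (lvl1 y $ i * lvl1 m $ j) - (1/2) * (lvl1 y $ i * lvl1 y $ j)"
  using assms by (simp_all add: tlog_def tinv_def algebra_simps)

lemma comp2: "(\<Sum>k\<in>S. f k) $ i $ j = (\<Sum>k\<in>S. f k $ i $ j)" by (simp add: sum_component)

lemma sum_log_iff:
  fixes x :: "nat \<Rightarrow> ('d::finite) tens2"
  assumes "lvl0 m = 1" "\<forall>k\<in>{1..N}. lvl0 (x k) = 1"
  shows "((\<Sum>k=1..N. tlog (tmul (tinv m) (x k))) = 0) \<longleftrightarrow>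
    (\<forall>i. (\<Sum>k=1..N. lvl1 (x k) $ i) = real N * lvl1 m $ i) \<and>
    (\<forall>i j. (\<Sum>k=1..N. lvl2 (x k) $ i $ j) - real N * lvl2 m $ i $ j
       + (real N / 2) * (lvl1 m $ i * lvl1 m $ j) - (1/2) * (lvl1 m $ i * (\<Sum>k=1..N. lvl1 (x k) $ j))
       + (1/2) * ((\<Sum>k=1..N. lvl1 (x k) $ i) * lvl1 m $ j) - (1/2) * (\<Sum>k=1..N. lvl1 (x k) $ i * lvl1 (x k) $ j) = 0)"
proof -
  let ?S = "\<Sum>k=1..N. tlog (tmul (tinv m) (x k))"
  have l0: "lvl0 ?S = 0" using assms by (simp add: log_term)
  have l1: "lvl1 ?S $ i = (\<Sum>k=1..N. lvl1 (x k) $ i) - real N * lvl1 m $ i" for i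
  proof -
    have "lvl1 ?S $ i = (\<Sum>k=1..N. lvl1 (x k) $ i - lvl1 m $ i)"
      using assms by (simp add: sum_component log_term)
    also have "\<dots> = (\<Sum>k=1..N. lvl1 (x k) $ i) - real N * lvl1 m $ i"
      by (simp add: sum_subtractf)
    finally show ?thesis .
  qed
  have l2: "lvl2 ?S $ i $ j = (\<Sum>k=1..N. lvl2 (x k) $ i $ j) - real N * lvl2 m $ i $ j
       + (real N / 2) * (lvl1 m $ i * lvl1 m $ j) - (1/2) * (lvl1 m $ i * (\<Sum>k=1..N. lvl1 (x k) $ j))
       + (1/2) * ((\<Sum>k=1..N. lvl1 (x k) $ i) * lvl1 m $ j) - (1/2) * (\<Sum>k=1..N. lvl1 (x k) $ i * lvl1 (x k) $ j)" for i j
  proof -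
    have "lvl2 ?S $ i $ j = (\<Sum>k=1..N. lvl2 (x k) $ i $ j - lvl2 m $ i $ j
       + (1/2) * (lvl1 m $ i * lvl1 m $ j) - (1/2) * (lvl1 m $ i * lvl1 (x k) $ j)
       + (1/2) * (lvl1 (x k) $ i * lvl1 m $ j) - (1/2) * (lvl1 (x k) $ i * lvl1 (x k) $ j))"
      unfolding lvl_sum comp2 using assms by (intro sum.cong refl) (simp add: log_term)
    also have "\<dots> = (\<Sum>k=1..N. lvl2 (x k) $ i $ j) - real N * lvl2 m $ i $ j
       + (real N / 2) * (lvl1 m $ i * lvl1 m $ j) - (1/2) * (lvl1 m $ i * (\<Sum>k=1..N. lvl1 (x k) $ j))
       + (1/2) * ((\<Sum>k=1..N. lvl1 (x k) $ i) * lvl1 m $ j) - (1/2) * (\<Sum>k=1..N. lvl1 (x k) $ i * lvl1 (x k) $ j)"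
      by (simp add: sum.distrib sum_subtractf sum_distrib_left sum_distrib_right)
    finally show ?thesis .
  qed
  have "?S = 0 \<longleftrightarrow> lvl1 ?S = 0 \<and> lvl2 ?S = 0" using l0 by (simp add: tens_eq)
  also have "\<dots> \<longleftrightarrow> (\<forall>i. lvl1 ?S $ i = 0) \<and> (\<forall>i j. lvl2 ?S $ i $ j = 0)"
    by (simp add: vec_eq_iff)
  finally show ?thesis unfolding l1 l2 by simp
qed


theorem theorem4p11:
  fixes x :: "nat \<Rightarrow> ('d::finite) tens2" and N :: nat
  assumes "N \<ge> 1"
    and "\<forall>i\<in>{1..N}. x i \<in> tgroup"
  shows "bary N x =
    tmk 1
        ((1 / real N) *\<^sub>R (\<Sum>i=1..N. lvl1 (x i)))
        ((1 / real N) *\<^sub>R (\<Sum>i=1..N. lvl2 (x i))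
         - (1 / (2 * real N)) *\<^sub>R (\<Sum>i=1..N. outer (lvl1 (x i)) (lvl1 (x i)))
         + (1 / (2 * (real N)^2)) *\<^sub>R (\<Sum>i1=1..N. \<Sum>i2=1..N. outer (lvl1 (x i1)) (lvl1 (x i2))))"
    (is "_ = ?c")
proof -
  define n where "n = real N"
  have n0: "n > 0" using assms(1) by (simp add: n_def)
  define sv where "sv i = (\<Sum>k=1..N. lvl1 (x k) $ i)" for i
  define SB where "SB i j = (\<Sum>k=1..N. lvl2 (x k) $ i $ j)" for i j
  define Sbb where "Sbb i j = (\<Sum>k=1..N. lvl1 (x k) $ i * lvl1 (x k) $ j)" for i j
  have x0: "\<forall>k\<in>{1..N}. lvl0 (x k) = 1" using assms(2) by (simp add: tgroup_iff)
  have xs: "lvl2 (x k) $ i $ j + lvl2 (x k) $ j $ i = lvl1 (x k) $ i * lvl1 (x k) $ j" if "k \<in> {1..N}" for k i j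
    using assms(2) that by (simp add: tgroup_iff)
  have SBsym: "SB i j + SB j i = Sbb i j" for i j
    unfolding SB_def Sbb_def sum.distrib[symmetric] using xs by (intro sum.cong refl) simp
  have Sbbsym: "Sbb i j = Sbb j i" for i j unfolding Sbb_def by (simp add: mult.commute)
  have c0: "lvl0 ?c = 1" by simp
  have c1: "lvl1 ?c $ i = sv i / n" for i
    by (simp add: sum_component sv_def n_def)
  have c2: "lvl2 ?c $ i $ j = SB i j / n - Sbb i j / (2 * n) + sv i * sv j / (2 * n^2)" for i j
  proof -
    have "(\<Sum>i1=1..N. \<Sum>i2=1..N. outer (lvl1 (x i1)) (lvl1 (x i2))) $ i $ j = sv i * sv j"
      by (simp add: comp2 sv_def sum_product)
    moreover have "(\<Sum>k=1..N. outer (lvl1 (x k)) (lvl1 (x k))) $ i $ j = Sbb i j"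
      by (simp add: comp2 Sbb_def)
    moreover have "(\<Sum>k=1..N. lvl2 (x k)) $ i $ j = SB i j"
      by (simp add: comp2 SB_def)
    ultimately show ?thesis by (simp add: n_def)
  qed
  have iff: "(\<Sum>k=1..N. tlog (tmul (tinv m) (x k))) = 0 \<longleftrightarrow>
      (\<forall>i. sv i = n * lvl1 m $ i) \<and>
      (\<forall>i j. SB i j - n * lvl2 m $ i $ j + (n / 2) * (lvl1 m $ i * lvl1 m $ j) - (1/2) * (lvl1 m $ i * sv j)
         + (1/2) * (sv i * lvl1 m $ j) - (1/2) * Sbb i j = 0)" if "lvl0 m = 1" for m
    using sum_log_iff[OF that x0] unfolding sv_def SB_def Sbb_def n_def .
  have cg: "?c \<in> tgroup"
    unfolding tgroup_iff
  proof (intro conjI allI)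
    fix i j
    show "lvl2 ?c $ i $ j + lvl2 ?c $ j $ i = lvl1 ?c $ i * lvl1 ?c $ j"
    proof -
      have e1: "SB j i = Sbb i j - SB i j" using SBsym[of i j] by simp
      show ?thesis
      unfolding c1 c2 e1 Sbbsym[of j i] using n0
      by (simp add: field_simps power2_eq_square)
    qed
  qed simp
  have ceq: "(\<Sum>k=1..N. tlog (tmul (tinv ?c) (x k))) = 0"
    unfolding iff[OF c0] c1 c2 using n0 by (simp add: field_simps power2_eq_square)
  have uniq: "m = ?c" if "m \<in> tgroup" "(\<Sum>k=1..N. tlog (tmul (tinv m) (x k))) = 0" for m
  proof -
    have m0: "lvl0 m = 1" using that(1) by (simp add: tgroup_iff)
    note h = that(2)[unfolded iff[OF m0]]
    have m1: "lvl1 m $ i = sv i / n" for i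
    proof -
      have "sv i = n * lvl1 m $ i" using h by blast
      thus ?thesis using n0 by (simp add: field_simps)
    qed
    have m2: "lvl2 m $ i $ j = SB i j / n - Sbb i j / (2 * n) + sv i * sv j / (2 * n^2)" for i j
    proof -
      have "SB i j - n * lvl2 m $ i $ j + (n / 2) * (lvl1 m $ i * lvl1 m $ j) - (1/2) * (lvl1 m $ i * sv j)
         + (1/2) * (sv i * lvl1 m $ j) - (1/2) * Sbb i j = 0" using h by blast
      hence "n * lvl2 m $ i $ j = SB i j + (n / 2) * (lvl1 m $ i * lvl1 m $ j) - (1/2) * (lvl1 m $ i * sv j)
         + (1/2) * (sv i * lvl1 m $ j) - (1/2) * Sbb i j" by linarith
      hence "lvl2 m $ i $ j = (SB i j + (n / 2) * (lvl1 m $ i * lvl1 m $ j) - (1/2) * (lvl1 m $ i * sv j)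
         + (1/2) * (sv i * lvl1 m $ j) - (1/2) * Sbb i j) / n" using n0 by (simp add: field_simps)
      thus ?thesis unfolding m1 using n0 by (simp add: field_simps power2_eq_square)
    qed
    have "lvl1 m = lvl1 ?c" unfolding vec_eq_iff m1 c1 by simp
    moreover have "lvl2 m = lvl2 ?c" unfolding vec_eq_iff m2 c2 by simp
    ultimately show ?thesis unfolding tens_eq using m0 c0 by simp
  qed
  show ?thesis unfolding bary_def
  proof (rule the_equality)
    show "?c \<in> tgroup \<and> (\<Sum>i = 1..N. tlog (tmul (tinv ?c) (x i))) = 0" using cg ceq by blast
  next
    fix m assume "m \<in> tgroup \<and> (\<Sum>i = 1..N. tlog (tmul (tinv m) (x i))) = 0"
    thus "m = ?c" using uniq by blast
  qed
qed

end
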